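(* Let $q=2^f$ with $f$ odd, and let $q_0<q$ be a power of $2$. Then there exist at least $2(q+1)/3$ elements $u\in\mathbb{F}_q$ such that the polynomial $X^{q_0+1}+uX^{q_0}+(u+1)X+1$ has no roots in $\mathbb{F}_q$. *)

theory Defs
  imports Complex_Main "HOL-Library.Cardinality"
begin

end

theory Submission
  imports Defs
begin

lemma card_times_zero:
  fixes a :: "'a::{field,finite}"
  shows "of_nat CARD('a) * a = 0"
proof -
  have "(\<Sum>y\<in>UNIV. a + y) = (\<Sum>y\<in>UNIV. y)"
    by (rule sum.reindex_bij_witness[of _ "\<lambda>y. y - a" "\<lambda>y. a + y"]) auto
  then show ?thesis by (simp add: sum.distrib)
qed

lemma fermat_field:
  fixes a :: "'a::{field,finite}"
  assumes "a \<noteq> 0"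
  shows "a ^ (CARD('a) - 1) = 1"
proof -
  let ?S = "UNIV - {0::'a}"
  have "(\<Prod>y\<in>?S. a * y) = (\<Prod>y\<in>?S. y)"
    by (rule prod.reindex_bij_witness[of _ "\<lambda>y. y / a" "\<lambda>y. a * y"]) (use assms in auto)
  moreover have "(\<Prod>y\<in>?S. a * y) = a ^ card ?S * (\<Prod>y\<in>?S. y)"
    by (simp add: prod.distrib)
  moreover have "(\<Prod>y\<in>?S. y) \<noteq> 0" by simp
  moreover have "card ?S = CARD('a) - 1" by (simp add: card_Diff_subset)
  ultimately show ?thesis by simp
qed

lemma pow2_mod3: "(2::nat) ^ (2*m+1) mod 3 = 2"
proof (induction m)
  case 0 then show ?case by simp
next
  case (Suc m)
  have "(2::nat) ^ (2*Suc m+1) = 4 * 2^(2*m+1)" by simp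
  then have "(2::nat) ^ (2*Suc m+1) mod 3 = (4 * (2^(2*m+1) mod 3)) mod 3"
    by (simp only: mod_mult_right_eq)
  then show ?case using Suc by simp
qed

lemma frob:
  fixes x y :: "'a::comm_ring_1"
  assumes "(2::'a) = 0"
  shows "(x + y) ^ (2 ^ e) = x ^ (2 ^ e) + y ^ (2 ^ e)"
proof (induction e)
  case 0 then show ?case by simp
next
  case (Suc e)
  have se: "(2::nat) ^ Suc e = 2 ^ e * 2" by simp
  have "(x + y) ^ (2 ^ Suc e) = ((x + y) ^ (2 ^ e))^2"
    by (simp only: se power_mult)
  also have "\<dots> = (x ^ (2 ^ e))^2 + (y ^ (2 ^ e))^2 + 2 * x ^ (2 ^ e) * y ^ (2 ^ e)"
    by (simp add: Suc power2_sum)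
  also have "\<dots> = x ^ (2 ^ Suc e) + y ^ (2 ^ Suc e)"
    by (simp only: assms se power_mult mult_zero_left mult_zero_right add_0_right)
  finally show ?case .
qed

theorem lemma5p1:
  fixes f e :: nat
  assumes field_size: "CARD('a) = 2 ^ f"
    and f_odd: "odd f"
    and q0_lt: "(2::nat) ^ e < 2 ^ f"
  shows "2 * (real (2 ^ f) + 1) / 3 \<le>
    real (card {u :: 'a::{field,finite}. \<forall>x :: 'a.
        x ^ (2 ^ e + 1) + u * x ^ (2 ^ e) + (u + 1) * x + 1 \<noteq> 0})"
proof -
  have two: "(2::'a) = 0"
  proof -
    have "(of_nat (2 ^ f) :: 'a) = 0" using card_times_zero[of "1::'a"] field_size by simp
    then have "(2::'a) ^ f = 0" by simp
    then show ?thesis by simp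
  qed
  have zz: "z + z = 0" for z :: 'a
  proof -
    have "z + z = 2 * z" by (rule mult_2[symmetric])
    then show ?thesis using two by simp
  qed
  have neg: "-z = z" for z :: 'a
    by (rule minus_unique[OF zz])
  have no3: "x^2 + x + 1 \<noteq> 0" for x :: 'a
  proof
    assume h: "x^2 + x + 1 = 0"
    have x0: "x \<noteq> 0" using h by auto
    have x3: "x ^ 3 = 1"
    proof -
      have "x ^ 3 - 1 = (x - 1) * (x^2 + x + 1)" by (simp add: algebra_simps power2_eq_square power3_eq_cube)
      then show ?thesis using h by simp
    qed
    obtain m where fm: "f = 2*m+1" using f_odd oddE by blast
    have "(2::nat)^f mod 3 = 2" using pow2_mod3 fm by simp
    then have "(2::nat)^f = 3*(2^f div 3) + 2" using div_mult_mod_eq[of "(2::nat)^f" 3] by simp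
    then obtain k where "(2::nat)^f = 3*k + 2" by blast
    then have "CARD('a) - 1 = 3*k+1" using field_size by simp
    then have "x ^ (3*k+1) = 1" using fermat_field[OF x0] by simp
    then have "x = 1" using x3 by (simp add: power_mult)
    then have "(1::'a) + 1 + 1 = 0" using h by simp
    then show False using two by simp
  qed
  define P where "P u x = x ^ (2 ^ e + 1) + u * x ^ (2 ^ e) + (u + 1) * x + 1" for u x :: 'a
  define \<sigma> where "\<sigma> x = inverse (x + 1)" for x :: 'a
  have P01: "P u 0 \<noteq> 0" "P u 1 \<noteq> 0" for u
    using two by (simp_all add: P_def power_0_left)
  have p1: "x + 1 \<noteq> 0" if "P u x = 0" for u x
  proof
    assume "x + 1 = 0"
    then have "x = - 1" by (simp add: eq_neg_iff_add_eq_0)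
    then have "x = 1" using neg[of 1] by simp
    then show False using that P01 by simp
  qed
  have sig_inv: "P u (\<sigma> x) = 0" if "P u x = 0" for u x
  proof -
    have x1: "x + 1 \<noteq> 0" using p1 that by blast
    define a where "a = x ^ (2^e)"
    have b: "(x+1)^(2^e) = a + 1" using frob[OF two] a_def by simp
    have "P u (\<sigma> x) = inverse ((a+1)*(x+1)) + u * inverse (a+1) + (u+1) * inverse (x+1) + 1"
      by (simp add: P_def \<sigma>_def power_inverse b power_add inverse_mult_distrib mult.commute)
    also have "\<dots> = P u x / ((a+1)*(x+1))"
    proof -
      have a1: "a + 1 \<noteq> 0" using b[symmetric] x1 by simp
      have "P u x = x * a + u * a + (u+1)*x + 1" by (simp add: P_def a_def power_add mult.commute)
      moreover have idt: "1 + u*(x+1) + (u+1)*(a+1) + (a+1)*(x+1) = x * a + u * a + (u+1)*x + 1 + 2*(1+u+a)"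
        by (simp add: algebra_simps)
      have ne: "(a+1)*(x+1) \<noteq> 0" using a1 x1 by simp
      then have ne2: "1 + (a + (x + a * x)) \<noteq> 0" by (simp add: algebra_simps)
      moreover have "inverse ((a+1)*(x+1)) + u * inverse (a+1) + (u+1) * inverse (x+1) + 1
          = (1 + u*(x+1) + (u+1)*(a+1) + (a+1)*(x+1)) / ((a+1)*(x+1))"
      proof -
        define D where "D = (a+1)*(x+1)"
        have i1: "inverse D * D = 1" using ne unfolding D_def by (rule left_inverse)
        have i2: "u * inverse (a+1) * D = u*(x+1)" using a1 unfolding D_def by (simp add: mult.assoc[symmetric])
        have i3: "(u+1) * inverse (x+1) * D = (u+1)*(a+1)" using x1 unfolding D_def by (simp add: mult.assoc[symmetric] mult.commute[of "a+1"])
        have "(inverse D + u * inverse (a+1) + (u+1) * inverse (x+1) + 1) * D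
           = 1 + u*(x+1) + (u+1)*(a+1) + (a+1)*(x+1)"
          unfolding distrib_right[of _ _ D] i1 i2 i3 by (simp add: D_def)
        then show ?thesis using ne unfolding D_def by (simp add: eq_divide_eq)
      qed
      ultimately show ?thesis using two idt by simp
    qed
    finally show ?thesis using that by simp
  qed
  have uniq: "u = v" if "P u x = 0" "P v x = 0" for u v x
  proof (rule ccontr)
    assume uv: "u \<noteq> v"
    have "P u x - P v x = (u - v) * (x ^ (2^e) + x)" by (simp add: P_def algebra_simps)
    then have "x ^ (2^e) + x = 0" using that uv by simp
    then have xe: "x ^ (2^e) = x" using neg by (metis add_eq_0_iff)
    have "P u x = x^2 + x + 1 + u * (x + x)"
      by (simp add: P_def power_add xe algebra_simps power2_eq_square)
    then have "P u x = x^2 + x + 1" using zz by simp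
    then show False using that no3 by simp
  qed
  have notfix: "y \<noteq> \<sigma> y" if "P u y = 0" for u y
  proof
    assume h: "y = \<sigma> y"
    have y1: "y + 1 \<noteq> 0" using p1 that by blast
    have "y * (y + 1) = \<sigma> y * (y + 1)" using h by (rule arg_cong[where f="\<lambda>z. z * (y + 1)"])
    also have "\<dots> = 1" using y1 by (simp add: \<sigma>_def)
    finally have "y * (y + 1) = 1" .
    then have "y^2 + y + 1 = 1 + 1" by (simp add: algebra_simps power2_eq_square)
    then show False using no3 zz by simp
  qed
  have notfix2: "y \<noteq> \<sigma> (\<sigma> y)" if "P u y = 0" for u y
  proof
    assume h: "y = \<sigma> (\<sigma> y)"
    have y1: "y + 1 \<noteq> 0" using p1 that by blast
    have y0: "y \<noteq> 0"
    proof
      assume "y = 0" then show False using that P01 by simp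
    qed
    have w: "inverse (y+1) + 1 \<noteq> 0"
    proof
      assume "inverse (y+1) + 1 = 0"
      then have "\<sigma> (\<sigma> y) = 0" unfolding \<sigma>_def by simp
      with h have "y = 0" by (rule trans)
      then show False using y0 by simp
    qed
    have "y * (inverse (y+1) + 1) = \<sigma> (\<sigma> y) * (inverse (y+1) + 1)" using h by (rule arg_cong[where f="\<lambda>z. z * (inverse (y+1) + 1)"])
    also have "\<dots> = 1" using w by (simp add: \<sigma>_def)
    finally have "y * (inverse (y+1) + 1) = 1" .
    then have "y * (inverse (y+1) + 1) * (y+1) = y + 1" by simp
    moreover have "y * (inverse (y+1) + 1) * (y+1) = y * (inverse (y+1) * (y+1)) + y * (y+1)"
      by (simp add: algebra_simps)
    moreover have "inverse (y+1) * (y+1) = 1" using y1 by (rule left_inverse)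
    ultimately have "y + y * (y + 1) = y + 1" by simp
    then have "y*y + (y+y) = y + 1" by (simp add: algebra_simps)
    then have "y*y = y + 1" using zz by simp
    then have "y^2 + y + 1 = (y + y) + (1 + 1)" by (simp add: algebra_simps power2_eq_square)
    then show False using no3 zz by simp
  qed
  define Z where "Z u = {x. P u x = 0}" for u
  define B where "B = {u. \<exists>x. P u x = 0}"
  have Z3: "3 \<le> card (Z u)" if uB: "u \<in> B" for u
  proof -
    obtain x where x: "P u x = 0" using uB B_def by auto
    have x2: "P u (\<sigma> x) = 0" using sig_inv x by blast
    have x3: "P u (\<sigma> (\<sigma> x)) = 0" using sig_inv x2 by blast
    have "{x, \<sigma> x, \<sigma> (\<sigma> x)} \<subseteq> Z u" using x x2 x3 Z_def by auto
    moreover have "card {x, \<sigma> x, \<sigma> (\<sigma> x)} = 3"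
      using notfix[OF x] notfix[OF x2] notfix2[OF x] by simp
    ultimately show ?thesis using card_mono[of "Z u" "{x, \<sigma> x, \<sigma> (\<sigma> x)}"] by simp
  qed
  have "3 * card B \<le> (\<Sum>u\<in>B. card (Z u))"
    using Z3 sum_mono[of B "\<lambda>_. 3" "\<lambda>u. card (Z u)"] by simp
  also have "\<dots> = card (\<Union>u\<in>B. Z u)"
    by (rule card_UN_disjoint[symmetric]) (auto simp: Z_def dest: uniq)
  also have "\<dots> \<le> card (UNIV - {0::'a, 1})"
    by (rule card_mono) (auto simp: Z_def P01)
  also have "\<dots> = CARD('a) - 2" by (simp add: card_Diff_subset)
  finally have cB: "3 * card B \<le> CARD('a) - 2" .
  have G: "{u :: 'a. \<forall>x :: 'a. x ^ (2 ^ e + 1) + u * x ^ (2 ^ e) + (u + 1) * x + 1 \<noteq> 0} = UNIV - B"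
    by (auto simp: B_def P_def)
  have cG: "card (UNIV - B) = CARD('a) - card B" by (simp add: card_Diff_subset)
  have q2: "2 \<le> CARD('a)"
  proof -
    have "card {0::'a, 1} \<le> CARD('a)" by (rule card_mono) auto
    then show ?thesis by simp
  qed
  have "card B \<le> CARD('a)" by (rule card_mono) auto
  then have "2 * (real CARD('a) + 1) / 3 \<le> real (CARD('a) - card B)"
    using cB q2 by (simp add: of_nat_diff)
  then show ?thesis unfolding G cG field_size by simp
qed

end
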